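(* Let $0<p<1$ and let $k\ge 1$ be an integer. A coin showing heads with probability $p$ and tails with probability $1-p$ is flipped independently until $\mathrm{H}^k\mathrm{T}$ ($k$ heads followed by a tails) first appears as consecutive flips; let $Y$ be the number of flips. Then \[ E(Y) = \frac{1}{(1-p)p^k},\qquad E(Y^2) = \frac{2}{(1-p)^2 p^{2k}} - \frac{2k+1}{(1-p) p^k}, \] \[ E(Y^3) = \frac{6}{(1-p)^3 p^{3k}} - \frac{12k+6}{(1-p)^2 p^{2k}} + \frac{3k^2+3k+1}{(1-p) p^k}, \] \[ E(Y^4) = \frac{24}{(1-p)^4 p^{4k}} - \frac{72k+36}{(1-p)^3 p^{3k}} + \frac{48k^2+48k+14}{(1-p)^2 p^{2k}} - \frac{4k^3+6k^2+4k+1}{(1-p) p^k}, \] \[ E(Y^5) = \frac{120}{(1-p)^5 p^{5k}} - \frac{240(2k+1)}{(1-p)^4 p^{4k}} + \frac{30(18k^2+18k+5)}{(1-p)^3 p^{3k}} - \frac{10(16k^3+24k^2+14k+3)}{(1-p)^2 p^{2k}} + \frac{(k+1)^5-k^5}{(1-p) p^k}. \] *)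

theory Defs
  imports "HOL-Probability.Probability"
begin

text \<open>Coin flips are modelled as an infinite stream of independent Bernoulli(p) trials,
  True = heads, False = tails. Flip number m (m \<ge> 1) is the stream entry at index m - 1.\<close>

definition coin_space :: "real \<Rightarrow> bool stream measure" where
  "coin_space p = stream_space (measure_pmf (bernoulli_pmf p))"

text \<open>The pattern H^k T is completed at flip n: flips n-k, ..., n-1 are heads and flip n is tails.\<close>
definition pattern_at :: "nat \<Rightarrow> bool stream \<Rightarrow> nat \<Rightarrow> bool" where
  "pattern_at k \<omega> n \<longleftrightarrow> k + 1 \<le> n \<and> (\<forall>i<k. \<omega> !! (n - k - 1 + i)) \<and> \<not> \<omega> !! (n - 1)"

text \<open>Number of flips until H^k T first appears (defined arbitrarily on the null set
  where it never appears).\<close>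
definition waiting_time :: "nat \<Rightarrow> bool stream \<Rightarrow> nat" where
  "waiting_time k \<omega> = (LEAST n. pattern_at k \<omega> n)"

end

theory Submission
  imports Defs
begin

locale coin =
  fixes p :: real and k :: nat
  assumes p0: "0 < p" and p1: "p < 1"
begin

abbreviation "M \<equiv> measure_pmf (bernoulli_pmf p)"
abbreviation "S \<equiv> coin_space p"

lemma S_def': "S = stream_space M" by (simp add: coin_space_def)

lemma prob_S: "prob_space S"
  unfolding S_def' by (rule prob_space.prob_space_stream_space[OF prob_space_measure_pmf])

lemma space_S[simp]: "space S = UNIV"
  by (simp add: S_def' space_stream_space)

lemma pred_snth[measurable]: "Measurable.pred S (\<lambda>\<omega>. \<omega> !! n)"
proof -
  have "(\<lambda>\<omega>. \<omega> !! n) \<in> measurable S M" unfolding S_def' by measurable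
  then show ?thesis using measurable_cong_sets[of S S M "count_space UNIV"] by auto
qed

lemma pred_pattern[measurable]: "Measurable.pred S (\<lambda>\<omega>. pattern_at k \<omega> n)"
  unfolding pattern_at_def by measurable

lemma Y_meas[measurable]: "waiting_time k \<in> measurable S (count_space UNIV)"
  unfolding waiting_time_def[abs_def] by measurable

lemma meas_sdrop[measurable]: "sdrop n \<in> measurable S S"
  unfolding S_def' by measurable

lemma meas_stl[measurable]: "stl \<in> measurable S S"
  unfolding S_def' by measurable

lemma S_UNIV[simp]: "emeasure S UNIV = 1"
  using prob_space.emeasure_space_1[OF prob_S] by simp

lemma nn_int_S:
  assumes [measurable]: "f \<in> borel_measurable S"
  shows "(\<integral>\<^sup>+X. f X \<partial>S) = (\<integral>\<^sup>+x. (\<integral>\<^sup>+X. f (x ## X) \<partial>S) \<partial>M)"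
  using prob_space.nn_integral_stream_space[OF prob_space_measure_pmf, of f] assms unfolding S_def' by simp

lemma meas_scons[measurable]: "(\<lambda>\<omega>. x ## \<omega>) \<in> measurable S S"
  unfolding S_def' by measurable

lemma prod_lemma:
  assumes [measurable]: "f \<in> borel_measurable S" "h \<in> borel_measurable S"
    and dep: "\<And>\<omega> \<omega>'. stake r \<omega> = stake r \<omega>' \<Longrightarrow> f \<omega> = f \<omega>'"
  shows "(\<integral>\<^sup>+\<omega>. f \<omega> * h (sdrop r \<omega>) \<partial>S) = (\<integral>\<^sup>+\<omega>. f \<omega> \<partial>S) * (\<integral>\<^sup>+\<omega>. h \<omega> \<partial>S)"
  using assms(1) dep
proof (induction r arbitrary: f)
  case 0
  interpret P: prob_space S by (rule prob_S)
  obtain c where c: "\<And>\<omega>. f \<omega> = c" using "0.prems"(2) by (metis stake.simps(1))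
  show ?case using P.emeasure_space_1 by (simp add: c nn_integral_cmult)
next
  case (Suc r)
  note [measurable] = Suc.prems(1)
  have IH: "(\<integral>\<^sup>+\<omega>. f (x ## \<omega>) * h (sdrop r \<omega>) \<partial>S) = (\<integral>\<^sup>+\<omega>. f (x ## \<omega>) \<partial>S) * (\<integral>\<^sup>+\<omega>. h \<omega> \<partial>S)" for x
    by (rule Suc.IH) (auto intro!: Suc.prems(2))
  have "(\<integral>\<^sup>+\<omega>. f \<omega> * h (sdrop (Suc r) \<omega>) \<partial>S) = (\<integral>\<^sup>+x. (\<integral>\<^sup>+\<omega>. f (x ## \<omega>) * h (sdrop r \<omega>) \<partial>S) \<partial>M)"
    by (subst nn_int_S) simp_all
  also have "\<dots> = (\<integral>\<^sup>+x. (\<integral>\<^sup>+\<omega>. f (x ## \<omega>) \<partial>S) * (\<integral>\<^sup>+\<omega>. h \<omega> \<partial>S) \<partial>M)"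
    by (simp add: IH)
  also have "\<dots> = (\<integral>\<^sup>+x. (\<integral>\<^sup>+\<omega>. f (x ## \<omega>) \<partial>S) \<partial>M) * (\<integral>\<^sup>+\<omega>. h \<omega> \<partial>S)"
    by (rule nn_integral_multc) measurable
  also have "(\<integral>\<^sup>+x. (\<integral>\<^sup>+\<omega>. f (x ## \<omega>) \<partial>S) \<partial>M) = (\<integral>\<^sup>+\<omega>. f \<omega> \<partial>S)"
    by (subst nn_int_S) simp_all
  finally show ?case .
qed

lemma heads_lemma:
  assumes [measurable]: "h \<in> borel_measurable S"
  shows "(\<integral>\<^sup>+\<omega>. (if \<forall>i<n. \<omega> !! i then h (sdrop n \<omega>) else 0) \<partial>S) = ennreal p ^ n * (\<integral>\<^sup>+\<omega>. h \<omega> \<partial>S)"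
proof (induction n)
  case 0
  then show ?case by simp
next
  case (Suc n)
  have eq: "(\<forall>i<Suc n. (x ## \<omega>) !! i) \<longleftrightarrow> x \<and> (\<forall>i<n. \<omega> !! i)" for x \<omega>
    by (auto simp: less_Suc_eq_0_disj)
  have "(\<integral>\<^sup>+\<omega>. (if \<forall>i<Suc n. \<omega> !! i then h (sdrop (Suc n) \<omega>) else 0) \<partial>S)
     = (\<integral>\<^sup>+x. (\<integral>\<^sup>+\<omega>. (if x \<and> (\<forall>i<n. \<omega> !! i) then h (sdrop n \<omega>) else 0) \<partial>S) \<partial>M)"
  proof (subst nn_int_S)
    show "(\<lambda>\<omega>. if \<forall>i<Suc n. \<omega> !! i then h (sdrop (Suc n) \<omega>) else 0) \<in> borel_measurable S"
      by measurable
  qed (auto simp: eq intro!: nn_integral_cong)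
  also have "\<dots> = ennreal p * (\<integral>\<^sup>+\<omega>. (if (\<forall>i<n. \<omega> !! i) then h (sdrop n \<omega>) else 0) \<partial>S)"
    using p0 p1 by (simp add: mult.commute)
  also have "\<dots> = ennreal p ^ Suc n * (\<integral>\<^sup>+\<omega>. h \<omega> \<partial>S)"
    by (simp add: Suc mult.assoc)
  finally show ?case .
qed

lemma tail_lemma: "(\<integral>\<^sup>+\<omega>. indicator {\<omega>. \<not> \<omega> !! 0} \<omega> \<partial>S) = ennreal (1 - p)"
proof -
  interpret P: prob_space S by (rule prob_S)
  have "(\<integral>\<^sup>+\<omega>. indicator {\<omega>. \<not> \<omega> !! 0} \<omega> \<partial>S) = (\<integral>\<^sup>+x. (\<integral>\<^sup>+\<omega>. indicator {\<omega>. \<not> \<omega> !! 0} (x ## \<omega>) \<partial>S) \<partial>M)"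
    by (rule nn_int_S) measurable
  also have "\<dots> = ennreal (1 - p)"
    using p0 p1 by (simp add: P.emeasure_space_1)
  finally show ?thesis .
qed

definition N :: "nat \<Rightarrow> bool stream \<Rightarrow> bool" where
  "N m \<omega> \<longleftrightarrow> (\<forall>j\<le>m. \<not> pattern_at k \<omega> j)"
definition B :: "bool stream \<Rightarrow> bool" where
  "B \<omega> \<longleftrightarrow> (\<forall>i<k. \<omega> !! i) \<and> \<not> \<omega> !! k"
definition F :: "nat \<Rightarrow> bool stream set" where
  "F n = {\<omega>. pattern_at k \<omega> n \<and> (\<forall>j<n. \<not> pattern_at k \<omega> j)}"
definition "q = (1 - p) * p ^ k"

lemma q_pos: "0 < q" using p0 p1 by (simp add: q_def)

lemma pred_N[measurable]: "Measurable.pred S (N m)"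
  unfolding N_def[abs_def] by measurable
lemma pred_B[measurable]: "Measurable.pred S B"
  unfolding B_def[abs_def] by measurable
lemma B_sets[measurable]: "{\<omega>. B \<omega>} \<in> sets S"
proof -
  have "{\<omega>\<in>space S. B \<omega>} \<in> sets S" by measurable
  then show ?thesis by simp
qed

lemma N_sets[measurable]: "{\<omega>. N m \<omega>} \<in> sets S"
proof -
  have "{\<omega>\<in>space S. N m \<omega>} \<in> sets S" by measurable
  then show ?thesis by simp
qed

lemma F_sets[measurable]: "F n \<in> sets S"
proof -
  have "{\<omega>\<in>space S. pattern_at k \<omega> n \<and> (\<forall>j<n. \<not> pattern_at k \<omega> j)} \<in> sets S" by measurable
  then show ?thesis by (simp add: F_def)
qed

lemma N_cong:
  assumes "\<forall>i<m. \<omega> !! i = \<omega>' !! i"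
  shows "N m \<omega> = N m \<omega>'"
proof -
  have "pattern_at k \<omega> j = pattern_at k \<omega>' j" if "j \<le> m" for j
  proof (cases "k + 1 \<le> j")
    case True
    have "\<forall>i<k. \<omega> !! (j - k - 1 + i) = \<omega>' !! (j - k - 1 + i)"
      using assms True that by auto
    moreover have "\<omega> !! (j - 1) = \<omega>' !! (j - 1)" using assms True that by auto
    ultimately show ?thesis unfolding pattern_at_def by auto
  next
    case False
    then show ?thesis unfolding pattern_at_def by auto
  qed
  then show ?thesis unfolding N_def by auto
qed

lemma F_eq: "F (m + k + 1) = {\<omega>. N m \<omega> \<and> B (sdrop m \<omega>)}"
proof -
  have pat: "pattern_at k \<omega> (m + k + 1) \<longleftrightarrow> B (sdrop m \<omega>)" for \<omega>
    unfolding pattern_at_def B_def by (auto simp: add.commute sdrop_snth)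
  have "\<not> pattern_at k \<omega> j" if "B (sdrop m \<omega>)" "m < j" "j \<le> m + k" for \<omega> j
  proof
    assume pj: "pattern_at k \<omega> j"
    then have "\<not> \<omega> !! (j - 1)" unfolding pattern_at_def by auto
    moreover have "sdrop m \<omega> !! (j - 1 - m)" using that unfolding B_def by auto
    then have "\<omega> !! (m + (j - 1 - m))" by (simp only: sdrop_snth)
    moreover have "m + (j - 1 - m) = j - 1" using that by auto
    ultimately show False by simp
  qed
  note mid = this
  show ?thesis
  proof (intro set_eqI iffI)
    fix \<omega> assume "\<omega> \<in> F (m + k + 1)"
    then show "\<omega> \<in> {\<omega>. N m \<omega> \<and> B (sdrop m \<omega>)}"
      unfolding F_def N_def pat[symmetric] by auto
  next
    fix \<omega> assume a: "\<omega> \<in> {\<omega>. N m \<omega> \<and> B (sdrop m \<omega>)}"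
    then have Bm: "B (sdrop m \<omega>)" and Nm: "N m \<omega>" by auto
    have "\<not> pattern_at k \<omega> j" if "j < m + k + 1" for j
    proof (cases "j \<le> m")
      case True with Nm show ?thesis unfolding N_def by blast
    next
      case False with that Bm mid show ?thesis by simp
    qed
    with Bm show "\<omega> \<in> F (m + k + 1)" unfolding F_def pat by blast
  qed
qed

lemma F_low: "n \<le> k \<Longrightarrow> F n = {}"
  unfolding F_def pattern_at_def by auto

lemma emeasure_B: "emeasure S {\<omega>. B \<omega>} = ennreal q"
proof -
  have eq: "(\<lambda>\<omega>. (if \<forall>i<k. \<omega> !! i then indicator {\<omega>. \<not> \<omega> !! 0} (sdrop k \<omega>) else 0)) = indicator {\<omega>. B \<omega>}"
    by (auto simp: B_def indicator_def fun_eq_iff sdrop_snth)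
  have h: "(\<integral>\<^sup>+\<omega>. (if \<forall>i<k. \<omega> !! i then indicator {\<omega>. \<not> \<omega> !! 0} (sdrop k \<omega>) else 0) \<partial>S)
     = ennreal p ^ k * (\<integral>\<^sup>+\<omega>. indicator {\<omega>. \<not> \<omega> !! 0} \<omega> \<partial>S)"
    by (rule heads_lemma) measurable
  have "(\<integral>\<^sup>+\<omega>. indicator {\<omega>. B \<omega>} \<omega> \<partial>S) = ennreal p ^ k * ennreal (1 - p)"
    using h unfolding eq tail_lemma .
  then have "emeasure S {\<omega>. B \<omega>} = ennreal p ^ k * ennreal (1 - p)"
    by (subst nn_integral_indicator[symmetric]) (simp_all add: B_sets)
  then show ?thesis using p0 p1 by (simp add: q_def ennreal_mult' ennreal_power mult.commute)
qed

lemma emeasure_F: "emeasure S (F (m + k + 1)) = emeasure S {\<omega>. N m \<omega>} * ennreal q"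
proof -
  have "emeasure S (F (m + k + 1)) = (\<integral>\<^sup>+\<omega>. indicator {\<omega>. N m \<omega>} \<omega> * indicator {\<omega>. B \<omega>} (sdrop m \<omega>) \<partial>S)"
  proof -
    have "emeasure S (F (m + k + 1)) = (\<integral>\<^sup>+\<omega>. indicator (F (m + k + 1)) \<omega> \<partial>S)"
      by (simp add: nn_integral_indicator)
    also have "\<dots> = (\<integral>\<^sup>+\<omega>. indicator {\<omega>. N m \<omega>} \<omega> * indicator {\<omega>. B \<omega>} (sdrop m \<omega>) \<partial>S)"
      by (intro nn_integral_cong) (simp only: F_eq, simp add: indicator_def)
    finally show ?thesis .
  qed
  also have "\<dots> = (\<integral>\<^sup>+\<omega>. indicator {\<omega>. N m \<omega>} \<omega> \<partial>S) * (\<integral>\<^sup>+\<omega>. indicator {\<omega>. B \<omega>} \<omega> \<partial>S)"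
  proof (rule prod_lemma)
    fix \<omega> \<omega>' :: "bool stream" assume "stake m \<omega> = stake m \<omega>'"
    then have "\<forall>i<m. \<omega> !! i = \<omega>' !! i" by (metis stake_nth)
    note N_cong[OF this]
    then show "indicator {\<omega>. N m \<omega>} \<omega> = (indicator {\<omega>. N m \<omega>} \<omega>' :: ennreal)"
      by (simp add: indicator_def)
  qed measurable
  finally show ?thesis using emeasure_B by simp
qed

abbreviation "WT \<equiv> waiting_time k"

lemma F_Y: "\<omega> \<in> F n \<Longrightarrow> WT \<omega> = n"
  unfolding F_def waiting_time_def by (auto intro!: Least_equality simp: not_less[symmetric])

lemma W_F: "pattern_at k \<omega> n \<Longrightarrow> \<omega> \<in> F (WT \<omega>)"
  unfolding F_def waiting_time_def by (auto intro: LeastI dest: not_less_Least)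

lemma W_le: "pattern_at k \<omega> n \<Longrightarrow> WT \<omega> \<le> n"
  unfolding waiting_time_def by (rule Least_le)

lemma notN_union: "{\<omega>. \<not> N m \<omega>} = (\<Union>n\<in>{..m}. F n)"
proof (intro set_eqI iffI)
  fix \<omega> assume "\<omega> \<in> {\<omega>. \<not> N m \<omega>}"
  then obtain j where j: "j \<le> m" "pattern_at k \<omega> j" unfolding N_def by auto
  then show "\<omega> \<in> (\<Union>n\<in>{..m}. F n)" using W_F[OF j(2)] W_le[OF j(2)] by auto
next
  fix \<omega> assume "\<omega> \<in> (\<Union>n\<in>{..m}. F n)"
  then show "\<omega> \<in> {\<omega>. \<not> N m \<omega>}" unfolding F_def N_def by auto
qed

lemma F_disj: "disjoint_family F"
  unfolding disjoint_family_on_def using F_Y by blast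

lemma s_eq: "measure S {\<omega>. N m \<omega>} + (\<Sum>n\<le>m. measure S (F n)) = 1"
proof -
  interpret P: prob_space S by (rule prob_S)
  have "measure S {\<omega>. \<not> N m \<omega>} = (\<Sum>n\<le>m. measure S (F n))"
    unfolding notN_union
    by (rule measure_finite_Union) (auto simp: F_disj[THEN disjoint_family_on_mono[rotated]])
  moreover have "{\<omega>. \<not> N m \<omega>} = space S - {\<omega>. N m \<omega>}" by auto
  ultimately show ?thesis using P.prob_compl[OF N_sets[of m]] by simp
qed

lemma a_eq: "measure S (F (m + k + 1)) = measure S {\<omega>. N m \<omega>} * q"
proof -
  interpret P: prob_space S by (rule prob_S)
  have "ennreal (measure S (F (m + k + 1))) = ennreal (measure S {\<omega>. N m \<omega>} * q)"
    using emeasure_F[of m] q_pos by (simp add: P.emeasure_eq_measure ennreal_mult)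
  then show ?thesis using q_pos by (simp add: ennreal_inj)
qed

lemma a_eq': "measure S (F (Suc (m + k))) = measure S {\<omega>. N m \<omega>} * q"
  using a_eq[of m] by simp

lemma s_small: "0 < e \<Longrightarrow> \<exists>m. measure S {\<omega>. N m \<omega>} < e"
proof (rule ccontr)
  assume e: "0 < e" and "\<not> (\<exists>m. measure S {\<omega>. N m \<omega>} < e)"
  then have ge: "\<And>m. e \<le> measure S {\<omega>. N m \<omega>}" by (simp add: not_less)
  obtain M :: nat where M: "1 / (q * e) < real M" using reals_Archimedean2 by blast
  have "real (Suc M) * (q * e) = (\<Sum>i\<le>M. q * e)" by simp
  also have "\<dots> \<le> (\<Sum>i\<le>M. measure S (F (i + k + 1)))"
    using ge q_pos by (intro sum_mono) (simp add: a_eq' mult.commute)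
  also have "\<dots> = (\<Sum>n\<in>(\<lambda>i. i + k + 1) ` {..M}. measure S (F n))"
    by (subst sum.reindex) (auto simp: inj_on_def)
  also have "\<dots> \<le> (\<Sum>n\<le>M + k + 1. measure S (F n))"
    by (intro sum_mono2) auto
  also have "\<dots> \<le> 1" using s_eq[of "M + k + 1"] measure_nonneg[of S "{\<omega>. N (M + k + 1) \<omega>}"] by linarith
  finally have "real (Suc M) * (q * e) \<le> 1" .
  moreover have "1 < real M * (q * e)" using M q_pos e by (simp add: field_simps)
  moreover have "0 < q * e" using q_pos e by simp
  ultimately show False by (simp add: distrib_right)
qed

lemma AE_W: "AE \<omega> in S. \<exists>n. pattern_at k \<omega> n"
proof -
  interpret P: prob_space S by (rule prob_S)
  let ?Z = "{\<omega>. \<forall>n. \<not> pattern_at k \<omega> n}"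
  have Zs: "?Z \<in> sets S"
  proof -
    have "{\<omega>\<in>space S. \<forall>n. \<not> pattern_at k \<omega> n} \<in> sets S" by measurable
    then show ?thesis by simp
  qed
  have "measure S ?Z \<le> measure S {\<omega>. N m \<omega>}" for m
    by (rule P.finite_measure_mono[OF _ N_sets]) (auto simp: N_def)
  then have "measure S ?Z < e" if "0 < e" for e
    using s_small[OF that] by (meson le_less_trans)
  then have "measure S ?Z = 0"
    by (metis less_irrefl measure_nonneg order_le_less)
  then have "?Z \<in> null_sets S" using Zs by (simp add: P.emeasure_eq_measure null_sets_def)
  then show ?thesis by (rule AE_I') auto
qed

lemma N_Y: "pattern_at k \<omega> n \<Longrightarrow> N j \<omega> \<longleftrightarrow> j < WT \<omega>"
proof
  assume pn: "pattern_at k \<omega> n" and "N j \<omega>"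
  have "pattern_at k \<omega> (WT \<omega>)" using W_F[OF pn] unfolding F_def by auto
  with \<open>N j \<omega>\<close> show "j < WT \<omega>" unfolding N_def by (meson not_less)
next
  assume pn: "pattern_at k \<omega> n" and "j < WT \<omega>"
  then show "N j \<omega>" unfolding N_def using W_le by (meson le_less_trans not_le)
qed

lemma main_formula:
  fixes g :: "nat \<Rightarrow> ennreal"
  shows "(\<integral>\<^sup>+\<omega>. g (WT \<omega>) \<partial>S) = ennreal q * (\<integral>\<^sup>+\<omega>. (\<Sum>m<WT \<omega>. g (m + k + 1)) \<partial>S)"
proof -
  have "(\<integral>\<^sup>+\<omega>. g (WT \<omega>) \<partial>S) = (\<integral>\<^sup>+\<omega>. (\<Sum>n. g n * indicator (F n) \<omega>) \<partial>S)"
  proof (rule nn_integral_cong_AE)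
    show "AE \<omega> in S. g (WT \<omega>) = (\<Sum>n. g n * indicator (F n) \<omega>)"
      using AE_W
    proof eventually_elim
      case (elim \<omega>)
      then obtain n where pn: "pattern_at k \<omega> n" by auto
      have "(\<Sum>n. g n * indicator (F n) \<omega>) = (\<Sum>n\<in>{WT \<omega>}. g n * indicator (F n) \<omega>)"
        by (rule suminf_finite) (auto dest: F_Y simp: indicator_def split: if_splits)
      also have "\<dots> = g (WT \<omega>)" using W_F[OF pn] by simp
      finally show ?case by simp
    qed
  qed
  also have "\<dots> = (\<Sum>n. g n * emeasure S (F n))"
    by (subst nn_integral_suminf) (auto simp: nn_integral_cmult_indicator)
  also have "\<dots> = (\<Sum>j. g (j + (k + 1)) * emeasure S (F (j + (k + 1)))) + (\<Sum>j<k + 1. g j * emeasure S (F j))"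
    by (rule suminf_offset) (rule summableI)
  also have "(\<Sum>j<k + 1. g j * emeasure S (F j)) = 0"
    by (rule sum.neutral) (auto simp: F_low)
  also have "(\<Sum>j. g (j + (k + 1)) * emeasure S (F (j + (k + 1)))) = (\<Sum>j. ennreal q * (g (j + k + 1) * emeasure S {\<omega>. N j \<omega>}))"
    using emeasure_F by (simp add: add.assoc mult_ac)
  also have "\<dots> = ennreal q * (\<Sum>j. g (j + k + 1) * emeasure S {\<omega>. N j \<omega>})"
    by simp
  also have "(\<Sum>j. g (j + k + 1) * emeasure S {\<omega>. N j \<omega>}) = (\<integral>\<^sup>+\<omega>. (\<Sum>j. g (j + k + 1) * indicator {\<omega>. N j \<omega>} \<omega>) \<partial>S)"
    by (subst nn_integral_suminf) (auto simp: nn_integral_cmult_indicator)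
  also have "\<dots> = (\<integral>\<^sup>+\<omega>. (\<Sum>m<WT \<omega>. g (m + k + 1)) \<partial>S)"
  proof (rule nn_integral_cong_AE)
    show "AE \<omega> in S. (\<Sum>j. g (j + k + 1) * indicator {\<omega>. N j \<omega>} \<omega>) = (\<Sum>m<WT \<omega>. g (m + k + 1))"
      using AE_W
    proof eventually_elim
      case (elim \<omega>)
      then obtain n where pn: "pattern_at k \<omega> n" by auto
      have "(\<Sum>j. g (j + k + 1) * indicator {\<omega>. N j \<omega>} \<omega>) = (\<Sum>j<WT \<omega>. g (j + k + 1) * indicator {\<omega>. N j \<omega>} \<omega>)"
        by (rule suminf_finite) (auto simp: N_Y[OF pn])
      also have "\<dots> = (\<Sum>m<WT \<omega>. g (m + k + 1))"
        by (rule sum.cong) (auto simp: N_Y[OF pn])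
      finally show ?case .
    qed
  qed
  finally show ?thesis by simp
qed

definition G :: "nat \<Rightarrow> nat \<Rightarrow> nat" where
  "G j n = (n - k) ^ Suc j - (n - k - 1) ^ Suc j"

lemma telescope: "(\<Sum>m<n. G j (m + k + 1)) = n ^ Suc j"
proof (induction n)
  case 0 then show ?case by (simp add: G_def)
next
  case (Suc n)
  have "n ^ Suc j \<le> Suc n ^ Suc j" by (rule power_mono) auto
  then show ?case using Suc by (simp add: G_def del: power_Suc)
qed

lemma pow_step: "(a + 1) ^ Suc j \<le> a ^ Suc j + Suc j * (a + 1) ^ j" for a :: nat
proof (induction j)
  case 0 then show ?case by simp
next
  case (Suc j)
  have "(a + 1) ^ Suc (Suc j) = (a + 1) * (a + 1) ^ Suc j" by simp
  also have "\<dots> \<le> (a + 1) * (a ^ Suc j + Suc j * (a + 1) ^ j)"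
    using Suc by (rule mult_left_mono) simp
  also have "\<dots> = a * a ^ Suc j + a ^ Suc j + Suc j * (a + 1) ^ Suc j"
    by (simp add: algebra_simps)
  also have "a ^ Suc j \<le> (a + 1) ^ Suc j" by (rule power_mono) auto
  then have "a * a ^ Suc j + a ^ Suc j + Suc j * (a + 1) ^ Suc j \<le> a ^ Suc (Suc j) + Suc (Suc j) * (a + 1) ^ Suc j"
    by simp
  finally show ?case .
qed

lemma G_bound: "G j n \<le> Suc j * n ^ j"
proof (cases "k + 1 \<le> n")
  case True
  define a where "a = n - k - 1"
  have "n - k = a + 1" using True by (simp add: a_def)
  then have "G j n = (a + 1) ^ Suc j - a ^ Suc j" by (simp add: G_def a_def)
  also have "\<dots> \<le> Suc j * (a + 1) ^ j" using pow_step[of a j] by linarith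
  also have "\<dots> \<le> Suc j * n ^ j" using True by (intro mult_left_mono power_mono) (auto simp: a_def)
  finally show ?thesis .
next
  case False then show ?thesis by (simp add: G_def)
qed

lemma main_G: "(\<integral>\<^sup>+\<omega>. of_nat (G j (WT \<omega>)) \<partial>S) = ennreal q * (\<integral>\<^sup>+\<omega>. of_nat (WT \<omega> ^ Suc j) \<partial>S)"
proof -
  have "(\<integral>\<^sup>+\<omega>. of_nat (G j (WT \<omega>)) \<partial>S) = ennreal q * (\<integral>\<^sup>+\<omega>. (\<Sum>m<WT \<omega>. of_nat (G j (m + k + 1))) \<partial>S)"
    by (rule main_formula)
  also have "(\<lambda>\<omega>. (\<Sum>m<WT \<omega>. of_nat (G j (m + k + 1)) :: ennreal)) = (\<lambda>\<omega>. of_nat (WT \<omega> ^ Suc j))"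
    by (simp only: of_nat_sum[symmetric] telescope)
  finally show ?thesis .
qed

lemma finite_moments: "(\<integral>\<^sup>+\<omega>. of_nat (WT \<omega> ^ j) \<partial>S) < \<infinity>"
proof (induction j)
  case 0
  then show ?case by simp
next
  case (Suc j)
  have "ennreal q * (\<integral>\<^sup>+\<omega>. of_nat (WT \<omega> ^ Suc j) \<partial>S) = (\<integral>\<^sup>+\<omega>. of_nat (G j (WT \<omega>)) \<partial>S)"
    by (rule main_G[symmetric])
  also have "\<dots> \<le> (\<integral>\<^sup>+\<omega>. of_nat (Suc j) * of_nat (WT \<omega> ^ j) \<partial>S)"
    by (intro nn_integral_mono) (metis G_bound of_nat_le_iff of_nat_mult)
  also have "\<dots> = of_nat (Suc j) * (\<integral>\<^sup>+\<omega>. of_nat (WT \<omega> ^ j) \<partial>S)"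
    by (rule nn_integral_cmult) measurable
  also have "\<dots> < \<infinity>" using Suc by (simp add: ennreal_mult_less_top of_nat_less_top)
  finally have "ennreal q * (\<integral>\<^sup>+\<omega>. of_nat (WT \<omega> ^ Suc j) \<partial>S) < \<infinity>" .
  then show ?case using q_pos by (auto simp: ennreal_mult_less_top)
qed

definition mu :: "nat \<Rightarrow> real" where
  "mu j = integral\<^sup>L S (\<lambda>\<omega>. real (WT \<omega>) ^ j)"

lemma integrable_mom: "integrable S (\<lambda>\<omega>. real (WT \<omega>) ^ j)"
proof (rule integrableI_nonneg)
  show "(\<integral>\<^sup>+\<omega>. ennreal (real (WT \<omega>) ^ j) \<partial>S) < \<infinity>"
    using finite_moments[of j] by (simp add: of_nat_power[symmetric] ennreal_of_nat_eq_real_of_nat del: of_nat_power)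
qed auto

lemma nn_G_fin: "(\<integral>\<^sup>+\<omega>. ennreal (real (G j (WT \<omega>))) \<partial>S) < \<infinity>"
proof -
  have "(\<integral>\<^sup>+\<omega>. ennreal (real (G j (WT \<omega>))) \<partial>S) = (\<integral>\<^sup>+\<omega>. of_nat (G j (WT \<omega>)) \<partial>S)"
    by (simp add: ennreal_of_nat_eq_real_of_nat)
  also have "\<dots> = ennreal q * (\<integral>\<^sup>+\<omega>. of_nat (WT \<omega> ^ Suc j) \<partial>S)" by (rule main_G)
  also have "\<dots> < \<infinity>" using finite_moments[of "Suc j"] by (simp add: ennreal_mult_less_top del: power_Suc of_nat_power)
  finally show ?thesis .
qed

lemma integrable_G: "integrable S (\<lambda>\<omega>. real (G j (WT \<omega>)))"
proof (rule integrableI_nonneg)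
  show "(\<integral>\<^sup>+\<omega>. ennreal (real (G j (WT \<omega>))) \<partial>S) < \<infinity>" by (rule nn_G_fin)
qed auto

lemma mu_nonneg: "0 \<le> mu j"
  unfolding mu_def by (rule Bochner_Integration.integral_nonneg) auto

lemma real_G: "integral\<^sup>L S (\<lambda>\<omega>. real (G j (WT \<omega>))) = q * mu (Suc j)"
proof -
  have "ennreal (integral\<^sup>L S (\<lambda>\<omega>. real (G j (WT \<omega>)))) = (\<integral>\<^sup>+\<omega>. ennreal (real (G j (WT \<omega>))) \<partial>S)"
    by (rule nn_integral_eq_integral[symmetric]) (auto simp: integrable_G)
  also have "\<dots> = ennreal q * (\<integral>\<^sup>+\<omega>. ennreal (real (WT \<omega>) ^ Suc j) \<partial>S)"
    using main_G[of j]
    by (simp add: of_nat_power[symmetric] ennreal_of_nat_eq_real_of_nat del: of_nat_power power_Suc)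
  also have "(\<integral>\<^sup>+\<omega>. ennreal (real (WT \<omega>) ^ Suc j) \<partial>S) = ennreal (mu (Suc j))"
    unfolding mu_def by (rule nn_integral_eq_integral[OF integrable_mom]) auto
  also have "ennreal q * ennreal (mu (Suc j)) = ennreal (q * mu (Suc j))"
    using q_pos mu_nonneg by (simp add: ennreal_mult)
  finally show ?thesis
    using q_pos by (subst (asm) ennreal_inj) (auto simp: mu_def intro!: mult_nonneg_nonneg integral_nonneg)
qed

lemma AE_Yge: "AE \<omega> in S. k + 1 \<le> WT \<omega>"
  using AE_W
proof eventually_elim
  case (elim \<omega>)
  then obtain n where "pattern_at k \<omega> n" by auto
  from W_F[OF this] show ?case unfolding F_def pattern_at_def by auto
qed

lemma poly_exp:
  fixes y c :: real
  shows "(y - c) ^ n - (y - c - 1) ^ n = (\<Sum>i\<le>n. of_nat (n choose i) * ((- c) ^ (n - i) - (- c - 1) ^ (n - i)) * y ^ i)"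
proof -
  have "(y - c) ^ n = (\<Sum>i\<le>n. of_nat (n choose i) * y ^ i * (- c) ^ (n - i))"
    using binomial_ring[of y "- c" n] by simp
  moreover have "(y - c - 1) ^ n = (y + (- c - 1)) ^ n" by (simp add: algebra_simps)
  then have "(y - c - 1) ^ n = (\<Sum>i\<le>n. of_nat (n choose i) * y ^ i * (- c - 1) ^ (n - i))"
    by (simp only: binomial_ring)
  ultimately show ?thesis by (simp add: sum_subtractf[symmetric] algebra_simps)
qed

lemma rec_mu: "q * mu (Suc j) = (\<Sum>i\<le>Suc j. of_nat (Suc j choose i) * ((- real k) ^ (Suc j - i) - (- real k - 1) ^ (Suc j - i)) * mu i)"
proof -
  have "q * mu (Suc j) = integral\<^sup>L S (\<lambda>\<omega>. real (G j (WT \<omega>)))" by (simp add: real_G)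
  also have "\<dots> = integral\<^sup>L S (\<lambda>\<omega>. (real (WT \<omega>) - real k) ^ Suc j - (real (WT \<omega>) - real k - 1) ^ Suc j)"
  proof (rule integral_cong_AE)
    show "AE \<omega> in S. real (G j (WT \<omega>)) = (real (WT \<omega>) - real k) ^ Suc j - (real (WT \<omega>) - real k - 1) ^ Suc j"
      using AE_Yge
    proof eventually_elim
      case (elim \<omega>)
      have le: "(WT \<omega> - k - 1) ^ Suc j \<le> (WT \<omega> - k) ^ Suc j" by (rule power_mono) auto
      show ?case using elim unfolding G_def
        by (simp add: of_nat_diff[OF le] of_nat_diff algebra_simps del: power_Suc)
    qed
  qed measurable
  also have "\<dots> = integral\<^sup>L S (\<lambda>\<omega>. (\<Sum>i\<le>Suc j. of_nat (Suc j choose i) * ((- real k) ^ (Suc j - i) - (- real k - 1) ^ (Suc j - i)) * real (WT \<omega>) ^ i))"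
    by (simp only: poly_exp)
  also have "\<dots> = (\<Sum>i\<le>Suc j. integral\<^sup>L S (\<lambda>\<omega>. of_nat (Suc j choose i) * ((- real k) ^ (Suc j - i) - (- real k - 1) ^ (Suc j - i)) * real (WT \<omega>) ^ i))"
    by (rule Bochner_Integration.integral_sum[where f="\<lambda>i \<omega>. of_nat (Suc j choose i) * ((- real k) ^ (Suc j - i) - (- real k - 1) ^ (Suc j - i)) * real (WT \<omega>) ^ i"])
      (auto intro!: integrable_mom)
  also have "\<dots> = (\<Sum>i\<le>Suc j. of_nat (Suc j choose i) * ((- real k) ^ (Suc j - i) - (- real k - 1) ^ (Suc j - i)) * mu i)"
    by (simp add: mu_def)
  finally show ?thesis .
qed

lemma mu0: "mu 0 = 1"
proof -
  interpret P: prob_space S by (rule prob_S)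
  show ?thesis using P.prob_space by (simp add: mu_def)
qed

lemma e1: "q * mu 1 = 1"
  using rec_mu[of 0] by (simp add: mu0)

lemma e2: "q * mu 2 = 2 * mu 1 - (2 * real k + 1)"
  using rec_mu[of 1] by (simp add: mu0 numeral_eq_Suc algebra_simps)

lemma e3: "q * mu 3 = 3 * mu 2 - (6 * real k + 3) * mu 1 + (3 * real k ^ 2 + 3 * real k + 1)"
  using rec_mu[of 2] by (simp add: mu0 numeral_eq_Suc algebra_simps)

lemma e4: "q * mu 4 = 4 * mu 3 - (12 * real k + 6) * mu 2 + (12 * real k ^ 2 + 12 * real k + 4) * mu 1
    - (4 * real k ^ 3 + 6 * real k ^ 2 + 4 * real k + 1)"
  using rec_mu[of 3] by (simp add: mu0 numeral_eq_Suc algebra_simps)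

lemma e5: "q * mu 5 = 5 * mu 4 - (20 * real k + 10) * mu 3 + (30 * real k ^ 2 + 30 * real k + 10) * mu 2
    - (20 * real k ^ 3 + 30 * real k ^ 2 + 20 * real k + 5) * mu 1
    + (5 * real k ^ 4 + 10 * real k ^ 3 + 10 * real k ^ 2 + 5 * real k + 1)"
  using rec_mu[of 4] by (simp add: mu0 numeral_eq_Suc algebra_simps)

lemma m1: "mu 1 = 1 / q"
  using e1 q_pos by (simp add: field_simps)

lemma m2: "mu 2 = 2 / q ^ 2 - (2 * real k + 1) / q"
proof -
  have h: "mu 2 = (2 * mu 1 - (2 * real k + 1)) / q" using e2 q_pos by (simp add: field_simps)
  show ?thesis unfolding h m1 using q_pos by (simp add: field_simps power2_eq_square)
qed

lemma m3: "mu 3 = 6 / q ^ 3 - (12 * real k + 6) / q ^ 2 + (3 * real k ^ 2 + 3 * real k + 1) / q"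
proof -
  have h: "mu 3 = (3 * mu 2 - (6 * real k + 3) * mu 1 + (3 * real k ^ 2 + 3 * real k + 1)) / q"
    using e3 q_pos by (simp add: field_simps)
  show ?thesis unfolding h m1 m2 using q_pos by (simp add: field_simps) algebra
qed

lemma m4: "mu 4 = 24 / q ^ 4 - (72 * real k + 36) / q ^ 3
            + (48 * real k ^ 2 + 48 * real k + 14) / q ^ 2
            - (4 * real k ^ 3 + 6 * real k ^ 2 + 4 * real k + 1) / q"
proof -
  have h: "mu 4 = (4 * mu 3 - (12 * real k + 6) * mu 2 + (12 * real k ^ 2 + 12 * real k + 4) * mu 1
    - (4 * real k ^ 3 + 6 * real k ^ 2 + 4 * real k + 1)) / q"
    using e4 q_pos by (simp add: field_simps)
  show ?thesis unfolding h m1 m2 m3 using q_pos by (simp add: field_simps) algebra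
qed

lemma m5: "mu 5 = 120 / q ^ 5 - 240 * (2 * real k + 1) / q ^ 4
            + 30 * (18 * real k ^ 2 + 18 * real k + 5) / q ^ 3
            - 10 * (16 * real k ^ 3 + 24 * real k ^ 2 + 14 * real k + 3) / q ^ 2
            + ((real k + 1) ^ 5 - real k ^ 5) / q"
proof -
  have h: "mu 5 = (5 * mu 4 - (20 * real k + 10) * mu 3 + (30 * real k ^ 2 + 30 * real k + 10) * mu 2
    - (20 * real k ^ 3 + 30 * real k ^ 2 + 20 * real k + 5) * mu 1
    + (5 * real k ^ 4 + 10 * real k ^ 3 + 10 * real k ^ 2 + 5 * real k + 1)) / q"
    using e5 q_pos by (simp add: field_simps)
  show ?thesis unfolding h m1 m2 m3 m4 using q_pos by (simp add: field_simps) algebra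
qed


lemma hb: "has_bochner_integral S (\<lambda>\<omega>. real (WT \<omega>) ^ n) (mu n)"
  unfolding mu_def by (rule has_bochner_integral_integrable[OF integrable_mom])

end

theorem corollary3p5:
  fixes p :: real and k :: nat
  assumes "0 < p" and "p < 1" and "1 \<le> k"
  defines "Y \<equiv> waiting_time k"
  shows "(has_bochner_integral (coin_space p) (\<lambda>\<omega>. real (Y \<omega>)) (1 / ((1 - p) * p ^ k))) \<and>
    (has_bochner_integral (coin_space p) (\<lambda>\<omega>. real (Y \<omega>) ^ 2)
           (2 / ((1 - p) ^ 2 * p ^ (2 * k)) - (2 * real k + 1) / ((1 - p) * p ^ k))) \<and>
    (has_bochner_integral (coin_space p) (\<lambda>\<omega>. real (Y \<omega>) ^ 3)
           (6 / ((1 - p) ^ 3 * p ^ (3 * k)) - (12 * real k + 6) / ((1 - p) ^ 2 * p ^ (2 * k))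
            + (3 * real k ^ 2 + 3 * real k + 1) / ((1 - p) * p ^ k))) \<and>
    (has_bochner_integral (coin_space p) (\<lambda>\<omega>. real (Y \<omega>) ^ 4)
           (24 / ((1 - p) ^ 4 * p ^ (4 * k)) - (72 * real k + 36) / ((1 - p) ^ 3 * p ^ (3 * k))
            + (48 * real k ^ 2 + 48 * real k + 14) / ((1 - p) ^ 2 * p ^ (2 * k))
            - (4 * real k ^ 3 + 6 * real k ^ 2 + 4 * real k + 1) / ((1 - p) * p ^ k))) \<and>
    (has_bochner_integral (coin_space p) (\<lambda>\<omega>. real (Y \<omega>) ^ 5)
           (120 / ((1 - p) ^ 5 * p ^ (5 * k)) - 240 * (2 * real k + 1) / ((1 - p) ^ 4 * p ^ (4 * k))
            + 30 * (18 * real k ^ 2 + 18 * real k + 5) / ((1 - p) ^ 3 * p ^ (3 * k))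
            - 10 * (16 * real k ^ 3 + 24 * real k ^ 2 + 14 * real k + 3) / ((1 - p) ^ 2 * p ^ (2 * k))
            + ((real k + 1) ^ 5 - real k ^ 5) / ((1 - p) * p ^ k)))"
proof -
  interpret C: coin p k using assms by unfold_locales
  have Q1: "(1 - p) * p ^ k = C.q" by (simp add: C.q_def)
  have Qn: "(1 - p) ^ n * p ^ (n * k) = C.q ^ n" for n
    by (simp add: C.q_def power_mult_distrib mult.commute[of n k] power_mult)
  show ?thesis
    unfolding Y_def Q1 Qn
    using C.hb[of 1] C.hb[of 2] C.hb[of 3] C.hb[of 4] C.hb[of 5] C.m1 C.m2 C.m3 C.m4 C.m5
    by simp
qed

end
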